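(* Let $(X,d)$ be a complete Alexandrov space, $G\subset X$ a closed, geodesically convex set with $(G,d)$ separable, $K>0$, and $\mu\in\mathfrak P(F_K(G))$. Let $g(x):=\int_{F_K(G)}f(x)\,d\mu(f)$ and let $\mathbb E\mu\in G$ denote the unique minimizer of $g$ over $G$. Then for all $x\in G$, \[ d(x,\mathbb E\mu)^2\le\frac2K\int_{F_K(G)}\big[f(x)-f(\mathbb E\mu)\big]\,d\mu(f).\]
   Context: Minimal geodesics $x\#_ty$ satisfy $d(x\#_sy,x\#_ty)=|s-t|d(x,y)$. A function $h$ is $K$-convex if $h(x\#_ty)\le(1-t)h(x)+th(y)-\frac K2t(1-t)d(x,y)^2$ along all minimal geodesics. $F_K(G)$ is the set of lower semi-continuous $K$-convex functions $G\to(-\infty,\infty]$ not identically $+\infty$, equipped with the $\sigma$-field $\mathcal E$ generated by the sets $\{h:\inf_Oh<\alpha\}$ for $O\subseteq G$ open and $\alpha\in\mathbb R$ (equivalently, the Effros $\sigma$-field on epigraphs). $\mathfrak P(F_K(G))$ is the set of complete probability measures $\mu$ on $(F_K(G),\mathcal E)$ such that $g(x)=\int f(x)\,d\mu(f)$ is a lower semi-continuous, $(-\infty,+\infty]$-valued, $K$-convex function on $G$ that is finite at some point of $G$. *)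

theory Defs
  imports "HOL-Probability.Probability"
begin

definition min_geodesic :: "(real \<Rightarrow> 'a::metric_space) \<Rightarrow> 'a \<Rightarrow> 'a \<Rightarrow> bool" where
  "min_geodesic \<gamma> x y \<longleftrightarrow> \<gamma> 0 = x \<and> \<gamma> 1 = y \<and>
     (\<forall>s\<in>{0..1}. \<forall>t\<in>{0..1}. dist (\<gamma> s) (\<gamma> t) = \<bar>s - t\<bar> * dist x y)"

text \<open>Alexandrov space of nonpositive curvature (global NPC / CAT(0)):
  geodesic space satisfying the NPC comparison inequality along all minimal geodesics.\<close>
definition alexandrov_space :: "'a::metric_space itself \<Rightarrow> bool" where
  "alexandrov_space _ \<longleftrightarrow>
     (\<forall>x y::'a. \<exists>\<gamma>. min_geodesic \<gamma> x y) \<and>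
     (\<forall>x y z::'a. \<forall>\<gamma>. min_geodesic \<gamma> x y \<longrightarrow> (\<forall>t\<in>{0..1}.
        (dist z (\<gamma> t))\<^sup>2 \<le> (1 - t) * (dist z x)\<^sup>2 + t * (dist z y)\<^sup>2 - t * (1 - t) * (dist x y)\<^sup>2))"

definition geodesically_convex :: "'a::metric_space set \<Rightarrow> bool" where
  "geodesically_convex G \<longleftrightarrow>
     (\<forall>x\<in>G. \<forall>y\<in>G. \<forall>\<gamma>. min_geodesic \<gamma> x y \<longrightarrow> \<gamma> ` {0..1} \<subseteq> G)"

definition separable_set :: "'a::metric_space set \<Rightarrow> bool" where
  "separable_set G \<longleftrightarrow> (\<exists>D. countable D \<and> D \<subseteq> G \<and> G \<subseteq> closure D)"

definition K_convex_on :: "real \<Rightarrow> 'a::metric_space set \<Rightarrow> ('a \<Rightarrow> ereal) \<Rightarrow> bool" where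
  "K_convex_on K G h \<longleftrightarrow>
     (\<forall>x\<in>G. \<forall>y\<in>G. \<forall>\<gamma>. min_geodesic \<gamma> x y \<longrightarrow> (\<forall>t\<in>{0..1}.
        h (\<gamma> t) \<le> ereal (1 - t) * h x + ereal t * h y - ereal (K / 2 * t * (1 - t) * (dist x y)\<^sup>2)))"

text \<open>Lower semicontinuity on G (w.r.t. the subspace topology; sequential, as G is metric).\<close>
definition lsc_on :: "'a::metric_space set \<Rightarrow> ('a \<Rightarrow> ereal) \<Rightarrow> bool" where
  "lsc_on G h \<longleftrightarrow>
     (\<forall>x\<in>G. \<forall>xs. (\<forall>n. xs n \<in> G) \<longrightarrow> xs \<longlonglongrightarrow> x \<longrightarrow> h x \<le> liminf (\<lambda>n. h (xs n)))"

text \<open>F_K(G): lsc K-convex functions G \<rightarrow> (-\<infinity>,\<infinity>], not identically \<infinity>.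
  Functions are represented on the whole space with the convention value \<infinity> outside G.\<close>
definition FK :: "real \<Rightarrow> 'a::metric_space set \<Rightarrow> ('a \<Rightarrow> ereal) set" where
  "FK K G = {h. (\<forall>x\<in>G. h x \<noteq> -\<infinity>) \<and> (\<forall>x. x \<notin> G \<longrightarrow> h x = \<infinity>) \<and>
               lsc_on G h \<and> K_convex_on K G h \<and> (\<exists>x\<in>G. h x \<noteq> \<infinity>)}"

definition FK_sets :: "real \<Rightarrow> 'a::metric_space set \<Rightarrow> ('a \<Rightarrow> ereal) set set" where
  "FK_sets K G = sigma_sets (FK K G)
     {{h \<in> FK K G. (INF x\<in>U. h x) < ereal \<alpha>} | U \<alpha>. openin (top_of_set G) U}"

definition eint :: "'b measure \<Rightarrow> ('b \<Rightarrow> ereal) \<Rightarrow> ereal" where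
  "eint M h = enn2ereal (\<integral>\<^sup>+ w. e2ennreal (h w) \<partial>M) - enn2ereal (\<integral>\<^sup>+ w. e2ennreal (- h w) \<partial>M)"

definition mean_fun :: "('a \<Rightarrow> ereal) measure \<Rightarrow> 'a \<Rightarrow> ereal" where
  "mean_fun \<mu> x = eint \<mu> (\<lambda>f. f x)"

definition PFK :: "real \<Rightarrow> 'a::metric_space set \<Rightarrow> ('a \<Rightarrow> ereal) measure set" where
  "PFK K G = {\<mu>. (\<exists>\<nu>. space \<nu> = FK K G \<and> sets \<nu> = FK_sets K G \<and> \<mu> = completion \<nu>) \<and>
       prob_space \<mu> \<and>
       (\<forall>x\<in>G. (\<integral>\<^sup>+ f. e2ennreal (- f x) \<partial>\<mu>) < \<infinity>) \<and>
       lsc_on G (mean_fun \<mu>) \<and> K_convex_on K G (mean_fun \<mu>) \<and>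
       (\<exists>x\<in>G. mean_fun \<mu> x \<noteq> \<infinity>)}"

end

theory Submission
  imports Defs
begin

lemma meas_eval:
  fixes G :: "'a::metric_space set"
  assumes x: "x \<in> G" and sp: "space \<nu> = FK K G" and st: "sets \<nu> = FK_sets K G"
  shows "(\<lambda>f. f x) \<in> borel_measurable \<nu>"
proof (rule borel_measurableI_le)
  fix y :: ereal
  show "{f \<in> space \<nu>. f x \<le> y} \<in> sets \<nu>"
  proof (cases y)
    case PInf
    then show ?thesis by simp
  next
    case MInf
    have "{f \<in> space \<nu>. f x \<le> y} = {}" using MInf x sp by (auto simp: FK_def)
    then show ?thesis by (metis sets.empty_sets)
  next
    case (real \<beta>)
    define U where "U n = ball x (inverse (real (Suc n))) \<inter> G" for n
    have opn: "openin (top_of_set G) (U n)" for n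
      unfolding U_def by (metis Int_commute open_ball openin_open_Int)
    have xU: "x \<in> U n" for n using x by (simp add: U_def)
    have eq: "{f \<in> space \<nu>. f x \<le> y} =
       (\<Inter>n. {h \<in> FK K G. (INF z\<in>U n. h z) < ereal (\<beta> + inverse (real (Suc n)))})"
    proof (intro equalityI subsetI)
      fix f assume "f \<in> {f \<in> space \<nu>. f x \<le> y}"
      then have f: "f \<in> FK K G" "f x \<le> ereal \<beta>" using sp real by auto
      have "(INF z\<in>U n. f z) < ereal (\<beta> + inverse (real (Suc n)))" for n
      proof -
        have "(INF z\<in>U n. f z) \<le> f x" by (rule INF_lower[OF xU])
        also have "\<dots> \<le> ereal \<beta>" by (rule f(2))
        also have "\<dots> < ereal (\<beta> + inverse (real (Suc n)))" by simp
        finally show ?thesis .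
      qed
      then show "f \<in> (\<Inter>n. {h \<in> FK K G. (INF z\<in>U n. h z) < ereal (\<beta> + inverse (real (Suc n)))})"
        using f(1) by blast
    next
      fix f assume "f \<in> (\<Inter>n. {h \<in> FK K G. (INF z\<in>U n. h z) < ereal (\<beta> + inverse (real (Suc n)))})"
      then have f: "f \<in> FK K G" and lt: "\<And>n. (INF z\<in>U n. f z) < ereal (\<beta> + inverse (real (Suc n)))"
        by auto
      have "\<exists>z. z \<in> U n \<and> f z < ereal (\<beta> + inverse (real (Suc n)))" for n
        using lt[of n] by (auto simp: INF_less_iff)
      then obtain xs where xs: "\<And>n. xs n \<in> U n" "\<And>n. f (xs n) < ereal (\<beta> + inverse (real (Suc n)))"
        by metis
      have xsG: "\<forall>n. xs n \<in> G" using xs(1) by (simp add: U_def)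
      have "xs \<longlonglongrightarrow> x"
      proof (rule metric_LIMSEQ_I)
        fix e :: real assume "e > 0"
        then obtain N where N: "inverse (real (Suc N)) < e" using reals_Archimedean by blast
        show "\<exists>N. \<forall>n\<ge>N. dist (xs n) x < e"
        proof (intro exI allI impI)
          fix n assume "N \<le> n"
          then have "inverse (real (Suc n)) \<le> inverse (real (Suc N))"
            by (simp add: le_imp_inverse_le)
          moreover have "dist (xs n) x < inverse (real (Suc n))"
            using xs(1)[of n] by (simp add: U_def dist_commute)
          ultimately show "dist (xs n) x < e" using N by linarith
        qed
      qed
      then have "f x \<le> liminf (\<lambda>n. f (xs n))"
        using f xsG x by (auto simp: FK_def lsc_on_def)
      also have "\<dots> \<le> liminf (\<lambda>n. ereal (\<beta> + inverse (real (Suc n))))"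
        by (rule Liminf_mono) (rule always_eventually, metis xs(2) less_imp_le)
      also have "\<dots> = ereal \<beta>"
      proof (rule lim_imp_Liminf)
        show "\<not> trivial_limit sequentially" by simp
        have "(\<lambda>n. \<beta> + inverse (real (Suc n))) \<longlonglongrightarrow> \<beta> + 0"
          by (intro tendsto_add tendsto_const LIMSEQ_inverse_real_of_nat)
        then show "(\<lambda>n. ereal (\<beta> + inverse (real (Suc n)))) \<longlonglongrightarrow> ereal \<beta>"
          by (simp add: tendsto_ereal)
      qed
      finally show "f \<in> {f \<in> space \<nu>. f x \<le> y}" using f sp real by simp
    qed
    have "{h \<in> FK K G. (INF z\<in>U n. h z) < ereal (\<beta> + inverse (real (Suc n)))} \<in> sets \<nu>" for n
      unfolding st FK_sets_def by (rule sigma_sets.Basic) (use opn in blast)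
    then show ?thesis unfolding eq by (intro sets.countable_INT) auto
  qed
qed


lemma real_lim_aux:
  fixes K D rm rx :: real
  assumes K: "K > 0" and D: "D \<ge> 0"
    and h: "\<And>t. 0 \<le> t \<Longrightarrow> t \<le> 1 \<Longrightarrow> rm \<le> (1 - t) * rm + t * rx - K / 2 * t * (1 - t) * D"
  shows "D \<le> 2 / K * (rx - rm)"
proof (rule ccontr)
  assume "\<not> ?thesis"
  then have c: "K / 2 * D > rx - rm" using K by (simp add: field_simps)
  have h1: "K / 2 * (1 - t) * D \<le> rx - rm" if "0 < t" "t \<le> 1" for t
  proof -
    have "0 \<le> t * (rx - rm - K / 2 * (1 - t) * D)" using h[of t] that by (simp add: algebra_simps)
    then show ?thesis using that by (simp add: zero_le_mult_iff)
  qed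
  have "0 \<le> rx - rm" using h1[of 1] by simp
  have Dp: "D > 0"
  proof (rule ccontr)
    assume "\<not> D > 0"
    then have "D = 0" using D by simp
    then show False using c \<open>0 \<le> rx - rm\<close> by simp
  qed
  define e where "e = K / 2 * D - (rx - rm)"
  have e: "e > 0" "e \<le> K / 2 * D" using c \<open>0 \<le> rx - rm\<close> by (auto simp: e_def)
  define t where "t = e / (K * D)"
  have t0: "0 < t" using e Dp K by (simp add: t_def)
  have "t \<le> 1 / 2" using e Dp K by (simp add: t_def field_simps)
  then have "K / 2 * (1 - t) * D \<le> rx - rm" using h1 t0 by simp
  moreover have "K / 2 * t * D = e / 2" using Dp K by (simp add: t_def field_simps)
  then have "K / 2 * (1 - t) * D = K / 2 * D - e / 2" by (simp add: algebra_simps field_simps)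
  ultimately have "K / 2 * D - e / 2 \<le> rx - rm" by simp
  then show False using e(1) e_def by linarith
qed

lemma pw_eq:
  fixes a b :: ereal
  assumes "a \<noteq> -\<infinity>" "b \<noteq> -\<infinity>" "b \<noteq> \<infinity>"
  shows "e2ennreal (a - b) + e2ennreal (- a) + e2ennreal b = e2ennreal (- (a - b)) + e2ennreal a + e2ennreal (- b)"
proof -
  obtain rb where b: "b = ereal rb" using assms by (cases b) auto
  show ?thesis
  proof (cases a)
    case (real ra)
    show ?thesis unfolding real b by (simp add: ennreal_plus_if)
  qed (use assms b in auto)
qed

lemma pw_le:
  fixes a b :: ereal
  assumes "a \<noteq> -\<infinity>" "b \<noteq> -\<infinity>" "b \<noteq> \<infinity>"
  shows "e2ennreal (- (a - b)) \<le> e2ennreal b + e2ennreal (- a)"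
proof -
  obtain rb where b: "b = ereal rb" using assms by (cases b) auto
  show ?thesis
  proof (cases a)
    case (real ra)
    show ?thesis unfolding real b by (simp add: ennreal_plus_if ennreal_le_iff2)
  qed (use assms b in auto)
qed


theorem proposition6p5:
  fixes G :: "'a::complete_space set" and K :: real
    and \<mu> :: "('a \<Rightarrow> ereal) measure" and m :: 'a
  assumes "alexandrov_space TYPE('a)"
    and "closed G" and "geodesically_convex G" and "separable_set G"
    and "K > 0" and "\<mu> \<in> PFK K G"
    and "m \<in> G" and "\<forall>x\<in>G. mean_fun \<mu> m \<le> mean_fun \<mu> x"
    and "\<forall>x\<in>G. mean_fun \<mu> x \<le> mean_fun \<mu> m \<longrightarrow> x = m"
  shows "\<forall>x\<in>G. ereal ((dist x m)\<^sup>2) \<le> ereal (2 / K) * eint \<mu> (\<lambda>f. f x - f m)"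
proof
  fix x assume xG: "x \<in> G"
  from assms(6) obtain \<nu> where sp\<nu>: "space \<nu> = FK K G" and st\<nu>: "sets \<nu> = FK_sets K G"
    and mu: "\<mu> = completion \<nu>"
    and negfin: "\<forall>x\<in>G. (\<integral>\<^sup>+ f. e2ennreal (- f x) \<partial>\<mu>) < \<infinity>"
    and conv: "K_convex_on K G (mean_fun \<mu>)" and ex: "\<exists>x\<in>G. mean_fun \<mu> x \<noteq> \<infinity>"
    unfolding PFK_def by blast
  have spmu: "space \<mu> = FK K G" using mu sp\<nu> by simp
  have meas: "(\<lambda>f. f y) \<in> borel_measurable \<mu>" if "y \<in> G" for y
    unfolding mu by (rule measurable_completion, rule meas_eval[OF that sp\<nu> st\<nu>])
  have mx[measurable]: "(\<lambda>f. f x) \<in> borel_measurable \<mu>" using meas xG by blast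
  have mm[measurable]: "(\<lambda>f. f m) \<in> borel_measurable \<mu>" using meas assms(7) by blast
  define P where "P y = (\<integral>\<^sup>+ f. e2ennreal (f y) \<partial>\<mu>)" for y
  define N where "N y = (\<integral>\<^sup>+ f. e2ennreal (- f y) \<partial>\<mu>)" for y
  define Dp where "Dp = (\<integral>\<^sup>+ f. e2ennreal (f x - f m) \<partial>\<mu>)"
  define Dm where "Dm = (\<integral>\<^sup>+ f. e2ennreal (- (f x - f m)) \<partial>\<mu>)"
  have g_def: "mean_fun \<mu> y = enn2ereal (P y) - enn2ereal (N y)" for y
    by (simp add: mean_fun_def eint_def P_def N_def)
  have eint_eq: "eint \<mu> (\<lambda>f. f x - f m) = enn2ereal Dp - enn2ereal Dm"
    by (simp add: eint_def Dp_def Dm_def)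
  have Nx: "N x < \<infinity>" and Nm: "N m < \<infinity>" using negfin xG assms(7) by (auto simp: N_def)
  obtain x0 where x0: "x0 \<in> G" "mean_fun \<mu> x0 \<noteq> \<infinity>" using ex by blast
  have "mean_fun \<mu> m \<le> mean_fun \<mu> x0" using assms(8) x0 by blast
  then have gmfin: "mean_fun \<mu> m \<noteq> \<infinity>" using x0 by auto
  have Pm: "P m < \<infinity>"
  proof (rule ccontr)
    assume "\<not> P m < \<infinity>"
    then have "P m = \<infinity>" using top.not_eq_extremum by fastforce
    moreover obtain r where "N m = ennreal r" using Nm by (cases "N m") auto
    ultimately have "mean_fun \<mu> m = \<infinity>" by (simp add: g_def)
    then show False using gmfin by simp
  qed
  have AEm: "AE f in \<mu>. e2ennreal (f m) \<noteq> \<infinity>"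
    by (rule nn_integral_PInf_AE) (use Pm in \<open>auto simp: P_def\<close>)
  have AE1: "AE f in \<mu>. f m \<noteq> \<infinity> \<and> f x \<noteq> -\<infinity> \<and> f m \<noteq> -\<infinity>"
    using AEm
  proof (rule AE_mp)
    show "AE f in \<mu>. e2ennreal (f m) \<noteq> \<infinity> \<longrightarrow> f m \<noteq> \<infinity> \<and> f x \<noteq> - \<infinity> \<and> f m \<noteq> - \<infinity>"
    proof (rule AE_I2, intro impI conjI)
      fix f assume f: "f \<in> space \<mu>" and e: "e2ennreal (f m) \<noteq> \<infinity>"
      show "f m \<noteq> \<infinity>" using e by auto
      show "f x \<noteq> - \<infinity>" "f m \<noteq> - \<infinity>" using f spmu xG assms(7) by (auto simp: FK_def)
    qed
  qed
  have ident: "Dp + N x + P m = Dm + P x + N m"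
  proof -
    have "Dp + N x + P m = (\<integral>\<^sup>+ f. e2ennreal (f x - f m) + e2ennreal (- f x) + e2ennreal (f m) \<partial>\<mu>)"
      unfolding Dp_def N_def P_def by (simp add: nn_integral_add)
    also have "\<dots> = (\<integral>\<^sup>+ f. e2ennreal (- (f x - f m)) + e2ennreal (f x) + e2ennreal (- f m) \<partial>\<mu>)"
      by (rule nn_integral_cong_AE, rule AE_mp[OF AE1], rule AE_I2) (auto intro: pw_eq)
    also have "\<dots> = Dm + P x + N m"
      unfolding Dm_def N_def P_def by (simp add: nn_integral_add)
    finally show ?thesis .
  qed
  have Dmle: "Dm \<le> P m + N x"
  proof -
    have "Dm \<le> (\<integral>\<^sup>+ f. e2ennreal (f m) + e2ennreal (- f x) \<partial>\<mu>)"
      unfolding Dm_def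
      by (rule nn_integral_mono_AE, rule AE_mp[OF AE1], rule AE_I2) (auto intro: pw_le)
    also have "\<dots> = P m + N x" unfolding P_def N_def by (simp add: nn_integral_add)
    finally show ?thesis .
  qed
  obtain nx where nx: "N x = ennreal nx" "nx \<ge> 0" using Nx by (cases "N x") auto
  obtain nm where nm: "N m = ennreal nm" "nm \<ge> 0" using Nm by (cases "N m") auto
  obtain pm where pm: "P m = ennreal pm" "pm \<ge> 0" using Pm by (cases "P m") auto
  obtain dm where dm: "Dm = ennreal dm" "dm \<ge> 0"
    using Dmle pm nx by (cases Dm) (auto simp flip: ennreal_plus simp: top_unique)
  have gm: "mean_fun \<mu> m = ereal (pm - nm)" using pm nm by (simp add: g_def)
  obtain \<gamma> where \<gamma>: "min_geodesic \<gamma> m x" using assms(1) unfolding alexandrov_space_def by blast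
  have \<gamma>G: "\<gamma> t \<in> G" if "t \<in> {0..1}" for t
    using assms(3) xG assms(7) \<gamma> that unfolding geodesically_convex_def by blast
  have cv: "mean_fun \<mu> m \<le> ereal (1 - t) * mean_fun \<mu> m + ereal t * mean_fun \<mu> x - ereal (K / 2 * t * (1 - t) * (dist x m)\<^sup>2)"
    if "t \<in> {0..1}" for t
  proof -
    have "mean_fun \<mu> m \<le> mean_fun \<mu> (\<gamma> t)" using assms(8) \<gamma>G[OF that] by blast
    also have "\<dots> \<le> ereal (1 - t) * mean_fun \<mu> m + ereal t * mean_fun \<mu> x - ereal (K / 2 * t * (1 - t) * (dist m x)\<^sup>2)"
      using conv assms(7) xG \<gamma> that unfolding K_convex_on_def by blast
    finally show ?thesis by (simp add: dist_commute)
  qed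
  show "ereal ((dist x m)\<^sup>2) \<le> ereal (2 / K) * eint \<mu> (\<lambda>f. f x - f m)"
  proof (cases "P x")
    case top
    then have "Dp = top" using ident nx pm dm nm by (cases Dp) (auto simp flip: ennreal_plus)
    then have "eint \<mu> (\<lambda>f. f x - f m) = \<infinity>" using eint_eq dm by simp
    then show ?thesis using assms(5) by simp
  next
    case (real px)
    obtain dp where dp: "Dp = ennreal dp" "dp \<ge> 0"
      using ident nx pm dm nm real by (cases Dp) (auto simp flip: ennreal_plus)
    have eqr: "dp + nx + pm = dm + px + nm"
      using ident nx pm dm nm real dp by (simp flip: ennreal_plus)
    have gx: "mean_fun \<mu> x = ereal (px - nx)" using real nx by (simp add: g_def)
    have ei: "eint \<mu> (\<lambda>f. f x - f m) = ereal ((px - nx) - (pm - nm))"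
      using eint_eq dp dm eqr by simp
    have "(dist x m)\<^sup>2 \<le> 2 / K * ((px - nx) - (pm - nm))"
    proof (rule real_lim_aux[OF assms(5)])
      fix t :: real assume "0 \<le> t" "t \<le> 1"
      then show "pm - nm \<le> (1 - t) * (pm - nm) + t * (px - nx) - K / 2 * t * (1 - t) * (dist x m)\<^sup>2"
        using cv[of t] gm gx by simp
    qed simp
    then show ?thesis using ei by simp
  qed
qed

end
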